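(* If $k \geq 9$ then the sets $\pi_{q_k}(S_{k-1}) + 1$ and $g_{q_k,k}(\pi_{q_k}(A_{q_k}))$ are $q_k^{-2k-4}$-strongly interleaved.
   Context: $q_k$ is the unique root in $(1,2)$ of $x^k - x^{k-1} - \cdots - x - 1 = 0$; note $\sum_{j=1}^k q_k^{-j} = 1$. $\pi_q((\epsilon_j)_{j\ge1}) = \sum_{j\ge1}\epsilon_j q^{-j}$. $S_{k-1}$ is the set of $(\epsilon_j) \in \{0,1\}^\mathbb{N}$ containing no block of consecutive entries equal to $01^{k-1}$ or $10^{k-1}$ (words concatenated, $a^n$ = $n$ repetitions). $g_{q,k}(x) = q^{-k}x + \sum_{j=1}^{k-1}q^{-j}$. The set $A_{q_k}$: let $(c_j)_{j\ge1} = 1^k0^\infty$; let $J = \{j : c_j = 0\}$ enumerated as $j_0 < j_1 < \cdots$; $J_{\mathrm{fixed},1} = \{j_n : n = 4m+1, m \ge 0\}$, $J_{\mathrm{fixed},0} = \{j_n : n = 4m+3, m\ge 0\}$. Then $A_{q_k}$ is the set of $(a_j) \in \{0,1\}^\mathbb{N}$ with $a_j = 1$ if $c_j = 1$, $a_j = 1$ if $j \in J_{\mathrm{fixed},1}$, and $a_j = 0$ if $j \in J_{\mathrm{fixed},0}$ (other entries free). A gap of a compact $C\subset\mathbb{R}$ is a maximal connected component of $\mathbb{R}\setminus C$; compact $C_1,C_2$ are interleaved if neither lies in a gap of the other. $d_{\mathrm{H}}$ is the Hausdorff distance; compact $A,B$ are $\epsilon$-strongly interleaved if any compact $A',B'$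 with $d_{\mathrm{H}}(A,A')\le\epsilon$, $d_{\mathrm{H}}(B,B')\le\epsilon$ are interleaved. *)

theory Defs
  imports "HOL-Analysis.Analysis" "HOL-Library.Infinite_Set"
begin

(* Sequences (eps_j)_{j>=1} in {0,1}^N are represented as functions nat => bool
   (True = 1); the value at index 0 is ignored everywhere. *)

definition qk :: "nat \<Rightarrow> real" where
  "qk k = (THE x. 1 < x \<and> x < 2 \<and> x ^ k - (\<Sum>j<k. x ^ j) = 0)"

definition pi_q :: "real \<Rightarrow> (nat \<Rightarrow> bool) \<Rightarrow> real" where
  "pi_q q e = (\<Sum>j. of_bool (e (Suc j)) * q powi (- int (Suc j)))"

definition S_set :: "nat \<Rightarrow> (nat \<Rightarrow> bool) set" where
  "S_set n = {e. \<not> (\<exists>i\<ge>1. \<not> e i \<and> (\<forall>m\<in>{1..n}. e (i + m)))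
              \<and> \<not> (\<exists>i\<ge>1. e i \<and> (\<forall>m\<in>{1..n}. \<not> e (i + m)))}"

definition g_qk :: "real \<Rightarrow> nat \<Rightarrow> real \<Rightarrow> real" where
  "g_qk q k x = q powi (- int k) * x + (\<Sum>j=1..k-1. q powi (- int j))"

definition c_seq :: "nat \<Rightarrow> nat \<Rightarrow> bool" where
  "c_seq k j = (1 \<le> j \<and> j \<le> k)"

definition J_set :: "nat \<Rightarrow> nat set" where
  "J_set k = {j. 1 \<le> j \<and> \<not> c_seq k j}"

definition J_fixed1 :: "nat \<Rightarrow> nat set" where
  "J_fixed1 k = {enumerate (J_set k) n | n. n mod 4 = 1}"

definition J_fixed0 :: "nat \<Rightarrow> nat set" where
  "J_fixed0 k = {enumerate (J_set k) n | n. n mod 4 = 3}"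

definition A_set :: "nat \<Rightarrow> (nat \<Rightarrow> bool) set" where
  "A_set k = {a. \<forall>j\<ge>1. (c_seq k j \<longrightarrow> a j) \<and> (j \<in> J_fixed1 k \<longrightarrow> a j)
                       \<and> (j \<in> J_fixed0 k \<longrightarrow> \<not> a j)}"

definition gaps :: "real set \<Rightarrow> real set set" where
  "gaps C = {connected_component_set (- C) x | x. x \<notin> C}"

definition in_gap :: "real set \<Rightarrow> real set \<Rightarrow> bool" where
  "in_gap D C = (\<exists>G\<in>gaps C. D \<subseteq> G)"

definition interleaved :: "real set \<Rightarrow> real set \<Rightarrow> bool" where
  "interleaved C1 C2 = (\<not> in_gap C1 C2 \<and> \<not> in_gap C2 C1)"

(* Hausdorff distance (meaningful for nonempty compact sets) *)
definition hausdorff_dist :: "real set \<Rightarrow> real set \<Rightarrow> real" where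
  "hausdorff_dist A B = max (SUP a\<in>A. infdist a B) (SUP b\<in>B. infdist b A)"

definition strongly_interleaved :: "real \<Rightarrow> real set \<Rightarrow> real set \<Rightarrow> bool" where
  "strongly_interleaved \<epsilon> A B =
     (\<forall>A' B'. compact A' \<and> compact B' \<and> A' \<noteq> {} \<and> B' \<noteq> {}
        \<and> hausdorff_dist A A' \<le> \<epsilon> \<and> hausdorff_dist B B' \<le> \<epsilon>
        \<longrightarrow> interleaved A' B')"

end

theory Submission
  imports Defs
begin


lemma gp_sum: "(1 - x) * (\<Sum>j<n. (x::real)^j) = 1 - x^n"
proof (induction n)
  case (Suc n)
  have "(1 - x) * (\<Sum>j<Suc n. x^j) = (1 - x) * (\<Sum>j<n. x^j) + (1 - x) * x^n"
    by (simp add: ring_distribs)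
  also have "\<dots> = 1 - x^Suc n" using Suc by (simp add: algebra_simps)
  finally show ?case .
qed simp

lemma sum_r: "(\<Sum>j<n. (r::real)^Suc j) * (1 - r) = r - r^Suc n"
proof (induction n)
  case (Suc n)
  have "(\<Sum>j<Suc n. r^Suc j) * (1 - r) = (\<Sum>j<n. r^Suc j) * (1 - r) + r^Suc n * (1 - r)"
    by (simp add: ring_distribs)
  also have "\<dots> = r - r^Suc (Suc n)" using Suc by (simp add: algebra_simps)
  finally show ?case .
qed simp

lemma root_rel:
  fixes x :: real
  assumes "1 < x" "x ^ k - (\<Sum>j<k. x ^ j) = 0"
  shows "(inverse x) ^ (k+1) = 2 * inverse x - 1"
proof -
  have "(1 - x) * x^k = 1 - x^k" using gp_sum[of x k] assms(2) by simp
  hence e: "x^(k+1) = 2 * x^k - 1" by (simp add: algebra_simps)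
  have x0: "x \<noteq> 0" using assms by simp
  have "x^(k+1) * (2 * inverse x - 1) = 2 * x^k - x^(k+1)"
    using x0 by (simp add: algebra_simps)
  also have "\<dots> = 1" using e by simp
  finally have "x^(k+1) * (2 * inverse x - 1) = 1" .
  hence "2 * inverse x - 1 = inverse (x^(k+1))"
    by (metis inverse_unique)
  thus ?thesis by (simp add: power_inverse)
qed

lemma root_sum1:
  fixes x :: real
  assumes "1 < x" "x ^ k - (\<Sum>j<k. x ^ j) = 0"
  shows "(\<Sum>j<k. (inverse x)^Suc j) = 1"
proof -
  let ?r = "inverse x"
  have r1: "?r < 1" "0 < ?r" using assms(1) by (auto simp: inverse_less_1_iff)
  have "(\<Sum>j<k. ?r^Suc j) * (1 - ?r) = 1 - ?r"
    using sum_r[where n=k and r="?r"] root_rel[OF assms] by simp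
  thus ?thesis using r1 assms(1) by simp
qed

lemma qk_props:
  assumes "k \<ge> 2"
  shows "1 < qk k \<and> qk k < 2 \<and> qk k ^ k - (\<Sum>j<k. qk k ^ j) = 0"
proof -
  let ?p = "\<lambda>x::real. x ^ k - (\<Sum>j<k. x ^ j)"
  have c: "continuous_on {1..2} ?p" by (intro continuous_intros)
  have p1: "?p 1 < 0" using assms by simp
  have "(1 - 2) * (\<Sum>j<k. (2::real)^j) = 1 - 2^k" by (rule gp_sum)
  hence p2: "?p 2 = 1" by simp
  obtain x where x: "1 \<le> x" "x \<le> 2" "?p x = 0"
    using IVT'[of ?p 1 0 2] c p1 p2 by force
  have "x \<noteq> 1" using x(3) p1 by (cases "x = 1") auto
  moreover have "x \<noteq> 2" using x(3) p2 by (cases "x = 2") auto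
  ultimately have x2: "1 < x \<and> x < 2 \<and> ?p x = 0" using x by auto
  have uniq: "y = x" if y: "1 < y \<and> y < 2 \<and> ?p y = 0" for y
  proof (rule ccontr)
    assume "y \<noteq> x"
    then consider "y < x" | "x < y" by linarith
    then show False
    proof cases
      case 1
      have ii: "inverse x ^ Suc j < inverse y ^ Suc j" for j
        by (rule power_strict_mono) (use 1 y in \<open>auto simp: less_imp_inverse_less\<close>)
      have "(\<Sum>j<k. (inverse x)^Suc j) < (\<Sum>j<k. (inverse y)^Suc j)"
        by (rule sum_strict_mono) (use assms ii in \<open>auto simp: lessThan_empty_iff\<close>)
      then show False using root_sum1[of x k] root_sum1[of y k] x2 y by simp
    next
      case 2
      have ii: "inverse y ^ Suc j < inverse x ^ Suc j" for j
        by (rule power_strict_mono) (use 2 x2 in \<open>auto simp: less_imp_inverse_less\<close>)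
      have "(\<Sum>j<k. (inverse y)^Suc j) < (\<Sum>j<k. (inverse x)^Suc j)"
        by (rule sum_strict_mono) (use assms ii in \<open>auto simp: lessThan_empty_iff\<close>)
      then show False using root_sum1[of x k] root_sum1[of y k] x2 y by simp
    qed
  qed
  have "\<exists>!x. 1 < x \<and> x < 2 \<and> ?p x = 0" using x2 uniq by blast
  then show ?thesis unfolding qk_def by (rule theI')
qed




definition tt :: "real \<Rightarrow> (nat \<Rightarrow> bool) \<Rightarrow> nat \<Rightarrow> real" where
  "tt r e j = of_bool (e (Suc j)) * r ^ Suc j"

lemma powi_neg: "(q::real) \<noteq> 0 \<Longrightarrow> q powi (- int n) = inverse q ^ n"
  by (simp add: power_int_minus power_inverse)

lemma pi_eq: "(q::real) > 0 \<Longrightarrow> pi_q q e = suminf (tt (inverse q) e)"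
proof -
  assume q: "q > 0"
  then have q0: "q \<noteq> 0" by simp
  show ?thesis unfolding pi_q_def tt_def by (simp only: powi_neg[OF q0])
qed

lemma tt_nonneg: "0 \<le> r \<Longrightarrow> 0 \<le> tt r e j"
  by (simp add: tt_def)

lemma tt_le: "0 \<le> r \<Longrightarrow> tt r e j \<le> r ^ Suc j"
  by (simp add: tt_def)

lemma geo_sums: "0 \<le> r \<Longrightarrow> r < (1::real) \<Longrightarrow> (\<lambda>j. r ^ Suc (j + n)) sums (r ^ Suc n / (1 - r))"
proof -
  assume r: "0 \<le> r" "r < 1"
  have "(\<lambda>j. r ^ Suc n * r ^ j) sums (r ^ Suc n * (1 / (1 - r)))"
    by (rule sums_mult) (rule geometric_sums, use r in auto)
  thus ?thesis by (simp add: power_add mult_ac)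
qed

lemma tt_summable: "0 \<le> r \<Longrightarrow> r < (1::real) \<Longrightarrow> summable (tt r e)"
  apply (rule summable_comparison_test'[where g="\<lambda>j. r ^ Suc (j + 0)"])
  using geo_sums[of r 0] by (auto simp: sums_iff tt_def)

lemma pi_ge_partial: "0 \<le> r \<Longrightarrow> r < (1::real) \<Longrightarrow> sum (tt r e) {..<n} \<le> suminf (tt r e)"
  by (rule sum_le_suminf) (auto intro: tt_summable tt_nonneg)

lemma pi_le_partial: assumes "0 \<le> r" "r < (1::real)"
  shows "suminf (tt r e) \<le> sum (tt r e) {..<n} + r ^ Suc n / (1 - r)"
proof -
  have s: "summable (tt r e)" using assms by (rule tt_summable)
  have "(\<Sum>j. tt r e (j + n)) \<le> (\<Sum>j. r ^ Suc (j + n))"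
    apply (rule suminf_le)
    using tt_le[OF assms(1)] s geo_sums[OF assms, of n] by (auto simp: sums_iff summable_iff_shift)
  also have "\<dots> = r ^ Suc n / (1 - r)" using geo_sums[OF assms, of n] by (simp add: sums_iff)
  finally show ?thesis using suminf_split_initial_segment[OF s, of n] by simp
qed

lemma pi_nonneg: "0 \<le> r \<Longrightarrow> r < (1::real) \<Longrightarrow> 0 \<le> suminf (tt r e)"
  by (rule suminf_nonneg) (auto intro: tt_summable tt_nonneg)

lemma pi_upper: "0 \<le> r \<Longrightarrow> r < (1::real) \<Longrightarrow> suminf (tt r e) \<le> r / (1 - r)"
  using pi_le_partial[of r e 0] by simp

lemma pi_true: "0 \<le> r \<Longrightarrow> r < (1::real) \<Longrightarrow> suminf (tt r (\<lambda>_. True)) = r / (1 - r)"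
proof -
  assume r: "0 \<le> r" "r < 1"
  have "tt r (\<lambda>_. True) = (\<lambda>j. r ^ Suc (j + 0))" by (simp add: tt_def fun_eq_iff)
  then show ?thesis using geo_sums[OF r, of 0] by (simp add: sums_iff)
qed

lemma pi_false: "suminf (tt r (\<lambda>_. False)) = 0"
proof -
  have "tt r (\<lambda>_. False) = (\<lambda>j. 0)" by (simp add: tt_def fun_eq_iff)
  then show ?thesis by simp
qed

lemma enum_atLeast: "enumerate {j::nat. m \<le> j} n = m + n"
proof (induction n arbitrary: m)
  case 0
  have "(LEAST j. j \<in> {j::nat. m \<le> j}) = m" by (rule Least_equality) auto
  then show ?case by (simp only: enumerate_0)
next
  case (Suc n)
  have "(LEAST j. j \<in> {j::nat. m \<le> j}) = m" by (simp add: Least_equality)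
  moreover have "{j::nat. m \<le> j} - {m} = {j. Suc m \<le> j}" by auto
  ultimately have "enumerate {j::nat. m \<le> j} (Suc n) = enumerate {j. Suc m \<le> j} n"
    by (simp only: enumerate_Suc)
  then show ?case using Suc by simp
qed

lemma J_set_eq: "J_set k = {j. Suc k \<le> j}"
  unfolding J_set_def c_seq_def by auto

lemma J1_eq: "J_fixed1 k = {j. Suc k \<le> j \<and> (j - Suc k) mod 4 = 1}"
proof (intro set_eqI iffI)
  fix j assume "j \<in> J_fixed1 k"
  then obtain m where "j = Suc k + m" "m mod 4 = 1" unfolding J_fixed1_def J_set_eq enum_atLeast by blast
  then show "j \<in> {j. Suc k \<le> j \<and> (j - Suc k) mod 4 = 1}" by simp
next
  fix j assume "j \<in> {j. Suc k \<le> j \<and> (j - Suc k) mod 4 = 1}"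
  then have "j = Suc k + (j - Suc k)" "(j - Suc k) mod 4 = 1" by auto
  then show "j \<in> J_fixed1 k" unfolding J_fixed1_def J_set_eq enum_atLeast by blast
qed

lemma J0_eq: "J_fixed0 k = {j. Suc k \<le> j \<and> (j - Suc k) mod 4 = 3}"
proof (intro set_eqI iffI)
  fix j assume "j \<in> J_fixed0 k"
  then obtain m where "j = Suc k + m" "m mod 4 = 3" unfolding J_fixed0_def J_set_eq enum_atLeast by blast
  then show "j \<in> {j. Suc k \<le> j \<and> (j - Suc k) mod 4 = 3}" by simp
next
  fix j assume "j \<in> {j. Suc k \<le> j \<and> (j - Suc k) mod 4 = 3}"
  then have "j = Suc k + (j - Suc k)" "(j - Suc k) mod 4 = 3" by auto
  then show "j \<in> J_fixed0 k" unfolding J_fixed0_def J_set_eq enum_atLeast by blast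
qed


lemma A1mem: "(\<lambda>j. (1 \<le> j \<and> j \<le> k) \<or> (Suc k \<le> j \<and> (j - Suc k) mod 4 = 1)) \<in> A_set k"
  unfolding A_set_def c_seq_def J1_eq J0_eq by auto
lemma A2mem: "(\<lambda>j. \<not> (Suc k \<le> j \<and> (j - Suc k) mod 4 = 3)) \<in> A_set k"
  unfolding A_set_def c_seq_def J1_eq J0_eq by auto

lemma sum_split_n:
  fixes f :: "nat \<Rightarrow> real"
  shows "sum f {..<k+2} = sum f {..<k} + f k + f (k+1)"
    and "sum f {..<k+3} = sum f {..<k} + f k + f (k+1) + f (k+2)"
    and "sum f {..<k+4} = sum f {..<k} + f k + f (k+1) + f (k+2) + f (k+3)"
    and "sum f {..<k+5} = sum f {..<k} + f k + f (k+1) + f (k+2) + f (k+3) + f (k+4)"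
  by (simp_all add: eval_nat_numeral add_ac)

lemma base_sum: assumes "(\<Sum>j<k. r^Suc j) = (1::real)" "\<And>j. 1 \<le> j \<Longrightarrow> j \<le> k \<Longrightarrow> a j"
  shows "sum (tt r a) {..<k} = 1"
proof -
  have "sum (tt r a) {..<k} = (\<Sum>j<k. r^Suc j)" by (rule sum.cong) (use assms(2) in \<open>auto simp: tt_def\<close>)
  then show ?thesis using assms(1) by simp
qed

lemma tt_T: "a (Suc j) \<Longrightarrow> tt r a j = r ^ Suc j" by (simp add: tt_def)
lemma tt_F: "\<not> a (Suc j) \<Longrightarrow> tt r a j = 0" by (simp add: tt_def)

lemma a1s: assumes "(\<Sum>j<k. r^Suc j) = (1::real)"
  shows "sum (tt r (\<lambda>j. (1 \<le> j \<and> j \<le> k) \<or> (Suc k \<le> j \<and> (j - Suc k) mod 4 = 1))) {..<k+5} = 1 + r^Suc (k+1)"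
proof -
  define a where "a = (\<lambda>j. (1 \<le> j \<and> j \<le> k) \<or> (Suc k \<le> j \<and> (j - Suc k) mod 4 = 1))"
  have b: "sum (tt r a) {..<k} = 1" by (rule base_sum[OF assms]) (simp add: a_def)
  have "tt r a k = 0" "tt r a (k+1) = r^Suc (k+1)" "tt r a (k+2) = 0" "tt r a (k+3) = 0" "tt r a (k+4) = 0"
    by (rule tt_F tt_T, simp add: a_def)+
  then show ?thesis using b sum_split_n(4)[of "tt r a" k] unfolding a_def by simp
qed

lemma a2s: assumes "(\<Sum>j<k. r^Suc j) = (1::real)"
  shows "sum (tt r (\<lambda>j. \<not> (Suc k \<le> j \<and> (j - Suc k) mod 4 = 3))) {..<k+3} = 1 + r^Suc k + r^Suc (k+1) + r^Suc (k+2)"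
proof -
  define a where "a = (\<lambda>j. \<not> (Suc k \<le> j \<and> (j - Suc k) mod 4 = 3))"
  have b: "sum (tt r a) {..<k} = 1" by (rule base_sum[OF assms]) (simp add: a_def)
  have "tt r a k = r^Suc k" "tt r a (k+1) = r^Suc (k+1)" "tt r a (k+2) = r^Suc (k+2)"
    by (rule tt_T, simp add: a_def)+
  then show ?thesis using b sum_split_n(2)[of "tt r a" k] unfolding a_def by simp
qed

lemma e2s: "sum (tt r (\<lambda>j. 2 * k < j \<and> odd j)) {..<2*k+4} = r^Suc (2*k) + r^Suc (2*k+2)"
proof -
  define a where "a = (\<lambda>j. 2 * k < j \<and> odd j)"
  have b: "sum (tt r a) {..<2*k} = 0" by (rule sum.neutral) (auto simp: tt_def a_def)
  have t: "tt r a (2*k) = r^Suc (2*k)" "tt r a (2*k+1) = 0" "tt r a (2*k+2) = r^Suc (2*k+2)" "tt r a (2*k+3) = 0"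
    by (rule tt_F tt_T, simp add: a_def)+
  have "sum (tt r a) {..<2*k+4} = r^Suc (2*k) + r^Suc (2*k+2)"
    unfolding sum_split_n(3) b t by simp
  then show ?thesis by (simp only: a_def)
qed

lemma Alow: assumes "(\<Sum>j<k. r^Suc j) = (1::real)" "0 \<le> r" "r < 1" "a \<in> A_set k"
  shows "1 + r^(k+2) \<le> suminf (tt r a)"
proof -
  have ak: "a j" if "1 \<le> j" "j \<le> k" for j using assms(4) that unfolding A_set_def c_seq_def by auto
  have ak2: "a (k+2)" using assms(4) unfolding A_set_def J1_eq by auto
  have b: "sum (tt r a) {..<k} = 1" by (rule base_sum[OF assms(1)]) (rule ak)
  have "tt r a (k+1) = r^(k+2)" using ak2 by (simp add: tt_def)
  then have "1 + r^(k+2) \<le> sum (tt r a) {..<k+2}"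
    using b tt_nonneg[OF assms(2), of a k] sum_split_n(1)[of "tt r a" k] by simp
  also have "\<dots> \<le> suminf (tt r a)" by (rule pi_ge_partial[OF assms(2,3)])
  finally show ?thesis .
qed



lemma H1:
  fixes X X' :: "real set"
  assumes "x \<in> X" "X \<subseteq> {lo..hi}" "compact X'" "X' \<noteq> {}" "hausdorff_dist X X' \<le> \<epsilon>"
  shows "\<exists>x'\<in>X'. \<bar>x - x'\<bar> \<le> \<epsilon>"
proof -
  obtain x0 where x0: "x0 \<in> X'" using assms(4) by blast
  have "bdd_above ((\<lambda>a. infdist a X') ` X)"
  proof (rule bdd_aboveI2)
    fix a assume "a \<in> X"
    then have "lo \<le> a" "a \<le> hi" using assms(2) by auto
    have "infdist a X' \<le> dist a x0" by (rule infdist_le[OF x0])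
    also have "\<dots> \<le> \<bar>lo\<bar> + \<bar>hi\<bar> + \<bar>x0\<bar>" using \<open>lo \<le> a\<close> \<open>a \<le> hi\<close> by (simp add: dist_real_def)
    finally show "infdist a X' \<le> \<bar>lo\<bar> + \<bar>hi\<bar> + \<bar>x0\<bar>" .
  qed
  then have "infdist x X' \<le> (SUP a\<in>X. infdist a X')" by (rule cSUP_upper[OF assms(1)])
  also have "\<dots> \<le> hausdorff_dist X X'" unfolding hausdorff_dist_def by (rule max.cobounded1)
  finally have i: "infdist x X' \<le> \<epsilon>" using assms(5) by simp
  obtain y where y: "y \<in> X'" "infdist x X' = dist x y"
    using infdist_attains_inf[OF compact_imp_closed[OF assms(3)] assms(4)] by blast
  have "\<bar>x - y\<bar> \<le> \<epsilon>" using i y(2) by (simp add: dist_real_def)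
  then show ?thesis using y(1) by blast
qed

lemma H2:
  fixes X X' :: "real set"
  assumes "x' \<in> X'" "X \<noteq> {}" "compact X'" "hausdorff_dist X X' \<le> \<epsilon>" "\<epsilon> < d"
  shows "\<exists>x\<in>X. \<bar>x - x'\<bar> < d"
proof -
  obtain x0 where x0: "x0 \<in> X" using assms(2) by blast
  obtain M where M: "\<And>b. b \<in> X' \<Longrightarrow> norm b \<le> M"
    using compact_imp_bounded[OF assms(3)] unfolding bounded_iff by blast
  have "bdd_above ((\<lambda>b. infdist b X) ` X')"
  proof (rule bdd_aboveI2)
    fix b assume "b \<in> X'"
    have "infdist b X \<le> dist b x0" by (rule infdist_le[OF x0])
    also have "\<dots> \<le> M + \<bar>x0\<bar>" using M[OF \<open>b \<in> X'\<close>] by (simp add: dist_real_def)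
    finally show "infdist b X \<le> M + \<bar>x0\<bar>" .
  qed
  then have "infdist x' X \<le> (SUP b\<in>X'. infdist b X)" by (rule cSUP_upper[OF assms(1)])
  also have "\<dots> \<le> hausdorff_dist X X'" unfolding hausdorff_dist_def by (rule max.cobounded2)
  finally have i: "infdist x' X < d" using assms(4,5) by simp
  then have "(INF a\<in>X. dist x' a) < d" using assms(2) by (simp add: infdist_def)
  moreover have bb: "bdd_below ((\<lambda>a. dist x' a) ` X)" by (rule bdd_belowI2[where m=0]) simp
  ultimately have "\<exists>a\<in>X. dist x' a < d" using cINF_less_iff[OF assms(2) bb] by simp
  then obtain a where "a \<in> X" "dist x' a < d" by blast
  then have "\<bar>a - x'\<bar> < d" by (simp add: dist_real_def abs_minus_commute)
  then show ?thesis using \<open>a \<in> X\<close> by blast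
qed

lemma abstract_si:
  fixes SS BB :: "real set"
  assumes e: "\<epsilon> > 0" and SSb: "SS \<subseteq> {lo..hi}" and BBb: "BB \<subseteq> {lo..hi}"
    and lo: "lo \<in> SS" and hi: "hi \<in> SS"
    and Bm: "\<And>b. b \<in> BB \<Longrightarrow> lo + 3 * \<epsilon> \<le> b \<and> b \<le> hi - 3 * \<epsilon>"
    and s: "s \<in> SS" and b1: "b1 \<in> BB" and b2: "b2 \<in> BB"
    and sb1: "b1 + 2 * \<epsilon> \<le> s" and sb2: "s \<le> b2 - 2 * \<epsilon>"
  shows "strongly_interleaved \<epsilon> SS BB"
  unfolding strongly_interleaved_def
proof (intro allI impI)
  fix A' B' :: "real set"
  assume H: "compact A' \<and> compact B' \<and> A' \<noteq> {} \<and> B' \<noteq> {}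
        \<and> hausdorff_dist SS A' \<le> \<epsilon> \<and> hausdorff_dist BB B' \<le> \<epsilon>"
  have BBne: "BB \<noteq> {}" using b1 by blast
  from H have cA: "compact A'" and cB: "compact B'" and nA: "A' \<noteq> {}" and nB: "B' \<noteq> {}"
    and hA: "hausdorff_dist SS A' \<le> \<epsilon>" and hB: "hausdorff_dist BB B' \<le> \<epsilon>" by auto
  have n1: "\<not> in_gap A' B'"
  proof
    assume "in_gap A' B'"
    then obtain GG where GG: "GG \<in> gaps B'" "A' \<subseteq> GG" unfolding in_gap_def by blast
    from GG(1) obtain x where "GG = connected_component_set (- B') x" unfolding gaps_def by blast
    with GG(2) have G: "A' \<subseteq> connected_component_set (- B') x" by simp
    obtain lo' where lo': "lo' \<in> A'" "\<bar>lo - lo'\<bar> \<le> \<epsilon>" using H1[OF lo SSb cA nA hA] by blast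
    obtain hi' where hi': "hi' \<in> A'" "\<bar>hi - hi'\<bar> \<le> \<epsilon>" using H1[OF hi SSb cA nA hA] by blast
    obtain b' where b': "b' \<in> B'" using nB by blast
    have "\<exists>b\<in>BB. \<bar>b - b'\<bar> < 2 * \<epsilon>" by (rule H2[OF b' BBne cB hB]) (use e in simp)
    then obtain b where b: "b \<in> BB" "\<bar>b - b'\<bar> < 2 * \<epsilon>" by blast
    have bb: "lo + 3 * \<epsilon> \<le> b" "b \<le> hi - 3 * \<epsilon>" using Bm[OF b(1)] by auto
    have "lo' \<le> b'" using lo'(2) b(2) bb unfolding abs_le_iff abs_less_iff by linarith
    moreover have "b' \<le> hi'" using hi'(2) b(2) bb unfolding abs_le_iff abs_less_iff by linarith
    moreover have "{lo'..hi'} \<subseteq> connected_component_set (- B') x"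
      by (rule connected_contains_Icc[OF connected_connected_component]) (use G lo'(1) hi'(1) in blast)+
    ultimately have "b' \<in> connected_component_set (- B') x" by auto
    then have "b' \<in> - B'" using connected_component_subset by blast
    then show False using b' by simp
  qed
  have n2: "\<not> in_gap B' A'"
  proof
    assume "in_gap B' A'"
    then obtain GG where GG: "GG \<in> gaps A'" "B' \<subseteq> GG" unfolding in_gap_def by blast
    from GG(1) obtain x where "GG = connected_component_set (- A') x" unfolding gaps_def by blast
    with GG(2) have G: "B' \<subseteq> connected_component_set (- A') x" by simp
    obtain b1' where b1': "b1' \<in> B'" "\<bar>b1 - b1'\<bar> \<le> \<epsilon>" using H1[OF b1 BBb cB nB hB] by blast
    obtain b2' where b2': "b2' \<in> B'" "\<bar>b2 - b2'\<bar> \<le> \<epsilon>" using H1[OF b2 BBb cB nB hB] by blast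
    obtain s' where s': "s' \<in> A'" "\<bar>s - s'\<bar> \<le> \<epsilon>" using H1[OF s SSb cA nA hA] by blast
    have "b1' \<le> s'" using b1'(2) s'(2) sb1 unfolding abs_le_iff by linarith
    moreover have "s' \<le> b2'" using b2'(2) s'(2) sb2 unfolding abs_le_iff by linarith
    moreover have "{b1'..b2'} \<subseteq> connected_component_set (- A') x"
      by (rule connected_contains_Icc[OF connected_connected_component]) (use G b1'(1) b2'(1) in blast)+
    ultimately have "s' \<in> connected_component_set (- A') x" by auto
    then have "s' \<in> - A'" using connected_component_subset by blast
    then show False using s' by simp
  qed
  show "interleaved A' B'" unfolding interleaved_def using n1 n2 by simp
qed


lemma pw_bounds: assumes "1/2 < r" "r < (10/19::real)"
  shows "1/4 < r^2" "r^2 < 100/361" "1/8 < r^3" "r^3 < 1000/6859" "1/16 < r^4" "r^4 < 10000/130321"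
        "1/32 < r^5" "r^5 < 100000/2476099"
proof -
  have a: "(1/2::real)^n < r^n" "r^n < (10/19)^n" if "n > 0" for n
    using assms that by (auto intro!: power_strict_mono)
  show "1/4 < r^2" "r^2 < 100/361" "1/8 < r^3" "r^3 < 1000/6859" "1/16 < r^4" "r^4 < 10000/130321"
        "1/32 < r^5" "r^5 < 100000/2476099"
    using a[of 2] a[of 3] a[of 4] a[of 5] by (simp_all add: power_divide)
qed
lemma I0: assumes "1/2 < r" "r < (10/19::real)" shows "r^2 < 1/3" "3 * r^4 < 1"
  using pw_bounds[OF assms] by linarith+

lemma I2: assumes "1/2 < r" "r < (10/19::real)" shows "r^4/(1-r) + 2 * r^3 \<le> r"
proof -
  note b = pw_bounds[OF assms]
  have h: "r^4 + 2 * r^3 - 2 * r^4 \<le> r - r^2" 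
  proof -
    have "r^4 = r * r^3" "r^3 = r * r^2" "r^2 = r * r" by (simp_all add: power_def)
    have "2 * r^2 + r - 1 - r^3 \<le> 0" using assms b by linarith
    then have "r * (2 * r^2 + r - 1 - r^3) \<le> 0" using assms by (simp add: mult_nonneg_nonpos)
    then show ?thesis by (simp add: algebra_simps power_def)
  qed
  have "1 - r > 0" using assms by simp
  have "r^4 \<le> (r - 2 * r^3) * (1 - r)" using h by (simp add: algebra_simps eval_nat_numeral)
  then have "r^4/(1-r) \<le> r - 2 * r^3" using \<open>1 - r > 0\<close> by (simp add: pos_divide_le_eq)
  then show ?thesis by simp
qed
lemma I1: assumes "1/2 < r" "r < (10/19::real)" shows "r + r^5/(1-r) + 2 * r^3 \<le> 1 + r^2"
proof -
  note b = pw_bounds[OF assms]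
  have "2*r - 2*r^2 + 3*r^3 - 2*r^4 + r^5 - 1 \<le> 0" using assms b by linarith
  then have h: "r * (1 - r) + r^5 + 2 * r^3 * (1 - r) \<le> (1 + r^2) * (1 - r)"
    by (simp add: algebra_simps power_def)
  have "1 - r > 0" using assms by simp
  have "r^5 \<le> (1 + r^2 - r - 2 * r^3) * (1 - r)" using h by (simp add: algebra_simps eval_nat_numeral)
  then have "r^5/(1-r) \<le> 1 + r^2 - r - 2 * r^3" using \<open>1 - r > 0\<close> by (simp add: pos_divide_le_eq)
  then show ?thesis by simp
qed
lemma Icontra: assumes "r + r^2 + r^3 + r^4 \<le> 1" "0 < r" shows "r < (10/19::real)"
proof (rule ccontr)
  assume "\<not> r < 10/19"
  then have a: "10/19 \<le> r" by simp
  have "(10/19)^n \<le> r^n" for n using a by (intro power_mono) auto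
  from this[of 2] this[of 3] this[of 4] show False using a assms(1) by (simp add: power_divide)
qed
theorem lemma4p5:
  fixes k :: nat
  assumes "k \<ge> 9"
  shows "strongly_interleaved (qk k powi (- int (2 * k + 4)))
           ((\<lambda>x. x + 1) ` (pi_q (qk k) ` S_set (k - 1)))
           (g_qk (qk k) k ` (pi_q (qk k) ` A_set k))"
proof -
  define q where "q = qk k"
  define r where "r = inverse q"
  have qp: "1 < q" "q < 2" "q ^ k - (\<Sum>j<k. q^j) = 0" using qk_props[of k] assms unfolding q_def by auto
  have r0: "0 < r" "r < 1" using qp unfolding r_def by (auto simp: inverse_less_1_iff)
  have rh: "1/2 < r" using qp unfolding r_def by (metis inverse_eq_divide less_imp_inverse_less zero_less_one order.strict_trans)
  have sum1: "(\<Sum>j<k. r^Suc j) = 1" using root_sum1[OF qp(1) qp(3)] unfolding r_def .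
  have "(\<Sum>j<4. r^Suc j) \<le> (\<Sum>j<k. r^Suc j)"
    by (rule sum_mono2) (use assms r0 in auto)
  then have "r + r^2 + r^3 + r^4 \<le> 1" using sum1 by (simp add: eval_nat_numeral)
  then have r19: "r < 10/19" using Icontra r0 by blast
  have q0: "q \<noteq> 0" using qp by simp
  have eps: "q powi (- int (2 * k + 4)) = r^(2*k+4)" unfolding r_def by (rule powi_neg[OF q0])
  have piq: "pi_q q e = suminf (tt r e)" for e unfolding r_def using qp by (simp add: pi_eq)
  have sk: "(\<Sum>j=1..k-1. q powi (- int j)) = 1 - r^k"
  proof -
    have "(\<Sum>j=1..k-1. q powi (- int j)) = (\<Sum>j=1..k-1. r^j)"
      unfolding r_def by (rule sum.cong) (simp_all add: powi_neg[OF q0])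
    also have "\<dots> = (\<Sum>j<k-1. r^Suc j)" using sum.atLeast1_atMost_eq[of "\<lambda>j. r^j" "k-1"] by simp
    also have "\<dots> = 1 - r^k"
    proof -
      have "k = Suc (k-1)" using assms by simp
      then have "(\<Sum>j<k. r^Suc j) = (\<Sum>j<k-1. r^Suc j) + r^k"
        by (metis sum.lessThan_Suc)
      then show ?thesis using sum1 by simp
    qed
    finally show ?thesis .
  qed
  have gq: "g_qk q k x = r^k * x + (1 - r^k)" for x
    unfolding g_qk_def sk unfolding r_def using powi_neg[OF q0, of k] by simp

  define T where "T = r / (1 - r)"
  define X where "X = r^(2*k+1)"
  define G where "G = (\<lambda>x. r^k * x + (1 - r^k))"
  have X0: "0 < X" unfolding X_def using r0 by simp
  have T1: "1 \<le> T" unfolding T_def using rh r0 by (simp add: field_simps)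
  have pw: "r^n * r^m = X * r^p" if "n + m = 2*k+1+p" for n m p
    unfolding X_def using that by (simp flip: power_add)
  have pw1: "r^n = X * r^p" if "n = 2*k+1+p" for n p
    unfolding X_def using that by (simp add: power_add)
  have rk1: "r^k \<le> 1" using r0 by (simp add: power_le_one)
  have rk0: "0 < r^k" using r0 by simp
  have Xr3: "3 * (X * r^3) < 1"
  proof -
    have "X * r^3 = r^(2*k+4)" by (rule pw1[symmetric]) simp
    also have "\<dots> \<le> r^4" using r0 by (intro power_decreasing) auto
    finally show ?thesis using I0(2)[OF rh r19] by simp
  qed
  have SSe: "(\<lambda>x. x + 1) ` (pi_q q ` S_set (k - 1)) = (\<lambda>e. suminf (tt r e) + 1) ` S_set (k - 1)"
    by (simp add: image_image piq)
  have BBe: "g_qk q k ` (pi_q q ` A_set k) = (\<lambda>a. G (suminf (tt r a))) ` A_set k"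
    by (simp add: image_image piq gq G_def)
  have Bm: "1 + 3 * (X * r^3) \<le> b \<and> b \<le> 1 + T - 3 * (X * r^3)"
    if hb: "b \<in> (\<lambda>a. G (suminf (tt r a))) ` A_set k" for b
  proof -
    obtain a where a: "a \<in> A_set k" "b = G (suminf (tt r a))" using hb by blast
    have bG: "b = r^k * suminf (tt r a) + (1 - r^k)" using a(2) unfolding G_def by simp
    have lo: "1 + r^(k+2) \<le> suminf (tt r a)" by (rule Alow[OF sum1 _ r0(2) a(1)]) (use r0 in simp)
    have hi: "suminf (tt r a) \<le> T" unfolding T_def by (rule pi_upper) (use r0 in auto)
    have m1: "r^k * (1 + r^(k+2)) \<le> r^k * suminf (tt r a)" using lo rk0 by simp
    have pf: "r^k * r^(k+2) = X * r" using pw[of k "k+2" 1] by simp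
    have e1: "r^k * (1 + r^(k+2)) = r^k + X * r" by (simp only: distrib_left mult_1_right pf)
    have "1 + X * r \<le> b" using m1 e1 bG by linarith
    moreover have "3 * (X * r^3) \<le> X * r"
    proof -
      have "r^3 = r * r^2" by (simp add: power_def)
      then have "3 * (X * r^3) = (X * r) * (3 * r^2)" by simp
      also have "\<dots> \<le> (X * r) * 1" using I0(1)[OF rh r19] X0 r0 by (intro mult_left_mono) auto
      finally show ?thesis by simp
    qed
    moreover have "b \<le> T"
    proof -
      have m2: "r^k * suminf (tt r a) \<le> r^k * T" using hi rk0 by simp
      have m3: "r^k * (T - 1) \<le> T - 1" using rk1 T1 rk0 by (intro mult_left_le_one_le) auto
      have "r^k * (T - 1) = r^k * T - r^k" by (simp only: right_diff_distrib mult_1_right)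
      then show ?thesis using m2 m3 bG by linarith
    qed
    ultimately show ?thesis using Xr3 by linarith
  qed
  define a1 where "a1 = (\<lambda>j. (1 \<le> j \<and> j \<le> k) \<or> (Suc k \<le> j \<and> (j - Suc k) mod 4 = 1))"
  define a2 where "a2 = (\<lambda>j. \<not> (Suc k \<le> j \<and> (j - Suc k) mod 4 = 3))"
  define e2 where "e2 = (\<lambda>j. 2 * k < j \<and> odd j)"
  have a1A: "a1 \<in> A_set k" unfolding a1_def by (rule A1mem)
  have a2A: "a2 \<in> A_set k" unfolding a2_def by (rule A2mem)
  have b1: "G (suminf (tt r a1)) \<le> 1 + X * r + X * r^5 / (1 - r)"
  proof -
    have "suminf (tt r a1) \<le> 1 + r^Suc (k+1) + r^Suc (k+5) / (1 - r)"
      using pi_le_partial[of r a1 "k+5"] a1s[OF sum1] r0 unfolding a1_def by simp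
    then have m: "r^k * suminf (tt r a1) \<le> r^k * (1 + r^Suc (k+1) + r^Suc (k+5) / (1 - r))"
      using rk0 by simp
    have p1: "r^k * r^Suc (k+1) = X * r" using pw[of k "Suc (k+1)" 1] by simp
    have p2: "r^k * r^Suc (k+5) = X * r^5" by (rule pw) simp
    have "r^k * (1 + r^Suc (k+1) + r^Suc (k+5) / (1 - r)) = r^k + X * r + X * r^5 / (1 - r)"
      by (simp only: distrib_left mult_1_right times_divide_eq_right p1 p2)
    then show ?thesis using m unfolding G_def by linarith
  qed
  have b2: "1 + X + X * r + X * r^2 \<le> G (suminf (tt r a2))"
  proof -
    have "1 + r^Suc k + r^Suc (k+1) + r^Suc (k+2) \<le> suminf (tt r a2)"
      using pi_ge_partial[of r a2 "k+3"] a2s[OF sum1] r0 unfolding a2_def by simp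
    then have m: "r^k * (1 + r^Suc k + r^Suc (k+1) + r^Suc (k+2)) \<le> r^k * suminf (tt r a2)"
      using rk0 by simp
    have p0: "r^k * r^Suc k = X" using pw[of k "Suc k" 0] by simp
    have p1: "r^k * r^Suc (k+1) = X * r" using pw[of k "Suc (k+1)" 1] by simp
    have p2: "r^k * r^Suc (k+2) = X * r^2" by (rule pw) simp
    have "r^k * (1 + r^Suc k + r^Suc (k+1) + r^Suc (k+2)) = r^k + X + X * r + X * r^2"
      by (simp only: distrib_left mult_1_right p0 p1 p2)
    then show ?thesis using m unfolding G_def by linarith
  qed
  have s1: "X + X * r^2 \<le> suminf (tt r e2)"
  proof -
    have "r^Suc (2*k) + r^Suc (2*k+2) \<le> suminf (tt r e2)"
      using pi_ge_partial[of r e2 "2*k+4"] e2s r0 unfolding e2_def by simp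
    moreover have "r^Suc (2*k) = X" using pw1[of "Suc (2*k)" 0] by simp
    moreover have "r^Suc (2*k+2) = X * r^2" by (rule pw1) simp
    ultimately show ?thesis by linarith
  qed
  have s2: "suminf (tt r e2) \<le> X + X * r^2 + X * r^4 / (1 - r)"
  proof -
    have "suminf (tt r e2) \<le> r^Suc (2*k) + r^Suc (2*k+2) + r^Suc (2*k+4) / (1 - r)"
      using pi_le_partial[of r e2 "2*k+4"] e2s r0 unfolding e2_def by simp
    moreover have "r^Suc (2*k) = X" using pw1[of "Suc (2*k)" 0] by simp
    moreover have "r^Suc (2*k+2) = X * r^2" by (rule pw1) simp
    moreover have "r^Suc (2*k+4) / (1 - r) = X * r^4 / (1 - r)"
    proof -
      have "r^Suc (2*k+4) = X * r^4" by (rule pw1) simp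
      then show ?thesis by (simp only:)
    qed
    ultimately show ?thesis by linarith
  qed
  have ineq1: "X * r + X * r^5 / (1 - r) + 2 * (X * r^3) \<le> X + X * r^2"
  proof -
    have "X * (r + r^5/(1-r) + 2 * r^3) \<le> X * (1 + r^2)"
      using I1[OF rh r19] X0 by (intro mult_left_mono) auto
    then show ?thesis by (simp add: distrib_left mult_ac)
  qed
  have ineq2: "X * r^4 / (1 - r) + 2 * (X * r^3) \<le> X * r"
  proof -
    have "X * (r^4/(1-r) + 2 * r^3) \<le> X * r"
      using I2[OF rh r19] X0 by (intro mult_left_mono) auto
    then show ?thesis by (simp add: distrib_left mult_ac)
  qed
  have k1: "1 \<in> {1..k-1}" "2 \<in> {1..k-1}" using assms by auto
  have e0S: "(\<lambda>_. False) \<in> S_set (k - 1)" unfolding S_set_def using k1 by blast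
  have e1S: "(\<lambda>_. True) \<in> S_set (k - 1)" unfolding S_set_def using k1 by blast
  have e2S: "e2 \<in> S_set (k - 1)"
  proof -
    have c1: "\<not> (\<not> e2 i \<and> e2 (i + 1) \<and> e2 (i + 2))" for i unfolding e2_def by auto
    have c2: "\<not> (e2 i \<and> \<not> e2 (i + 2))" for i unfolding e2_def by auto
    show ?thesis unfolding S_set_def using k1 c1 c2 by blast
  qed
  have eps': "r^(2*k+4) = X * r^3" by (rule pw1) simp
  have f1: "0 < X * r^3" using X0 r0 by simp
  have f2: "(\<lambda>e. suminf (tt r e) + 1) ` S_set (k - 1) \<subseteq> {1..1 + T}"
    unfolding T_def using pi_nonneg[of r] pi_upper[of r] r0 by auto
  have f3: "(\<lambda>a. G (suminf (tt r a))) ` A_set k \<subseteq> {1..1 + T}"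
  proof
    fix b assume "b \<in> (\<lambda>a. G (suminf (tt r a))) ` A_set k"
    from Bm[OF this] f1 show "b \<in> {1..1 + T}" by simp
  qed
  have f4: "1 \<in> (\<lambda>e. suminf (tt r e) + 1) ` S_set (k - 1)"
    by (rule image_eqI[OF _ e0S]) (simp add: pi_false)
  have f5: "1 + T \<in> (\<lambda>e. suminf (tt r e) + 1) ` S_set (k - 1)"
    by (rule image_eqI[OF _ e1S]) (use r0 in \<open>simp add: pi_true T_def\<close>)
  have f7: "suminf (tt r e2) + 1 \<in> (\<lambda>e. suminf (tt r e) + 1) ` S_set (k - 1)"
    by (rule imageI[OF e2S])
  have f8: "G (suminf (tt r a1)) \<in> (\<lambda>a. G (suminf (tt r a))) ` A_set k" by (rule imageI[OF a1A])
  have f9: "G (suminf (tt r a2)) \<in> (\<lambda>a. G (suminf (tt r a))) ` A_set k" by (rule imageI[OF a2A])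
  have f10: "G (suminf (tt r a1)) + 2 * (X * r ^ 3) \<le> suminf (tt r e2) + 1"
    using b1 s1 ineq1 by linarith
  have f11: "suminf (tt r e2) + 1 \<le> G (suminf (tt r a2)) - 2 * (X * r ^ 3)"
    using b2 s2 ineq2 by linarith
  have main: "strongly_interleaved (X * r^3) ((\<lambda>e. suminf (tt r e) + 1) ` S_set (k - 1))
     ((\<lambda>a. G (suminf (tt r a))) ` A_set k)"
    by (rule abstract_si[OF f1 f2 f3 f4 f5 Bm f7 f8 f9 f10 f11])
  show ?thesis using main unfolding q_def[symmetric] eps SSe BBe eps' .
qed

end
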